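(* Let $d=1$. Then $\Pi^{0}=\mathbb{Q}$. That is, a real number $x$ has the property that for every non-increasing $\psi:\mathbb{N}\to\mathbb{R}_{\ge0}$ with $\sum_n\psi(n)=\infty$ there are infinitely many $n\in\mathbb{N}$ with $\|nx\|<\psi(n)$, if and only if $x\in\mathbb{Q}$.
   Context: For $t\in\mathbb{R}$, $\|t\|$ is the distance from $t$ to $\mathbb{Z}$. Write $\mathbb{N}=\{1,2,\dots\}$. $\Pi^0=\{x\in\mathbb{R}:(x,0)\in\Pi\}$, where $\Pi$ is the set of $(x,y)\in\mathbb{R}^2$ such that for every non-increasing $\psi:\mathbb{N}\to\mathbb{R}_{\ge0}$ with $\sum_n\psi(n)=\infty$, one has $\|nx+y\|<\psi(n)$ for infinitely many $n\in\mathbb{N}$. *)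

theory Defs
  imports "HOL-Analysis.Analysis"
begin

definition dist_int :: "real \<Rightarrow> real" where
  "dist_int t = (INF k\<in>(\<int>::real set). \<bar>t - k\<bar>)"

text \<open>Admissible psi on N = {1,2,...}: nonnegative, non-increasing, divergent sum.
  Values at 0 are irrelevant.\<close>
definition admissible_psi :: "(nat \<Rightarrow> real) \<Rightarrow> bool" where
  "admissible_psi \<psi> \<longleftrightarrow>
     (\<forall>n\<ge>1. \<psi> n \<ge> 0) \<and>
     (\<forall>m n. 1 \<le> m \<longrightarrow> m \<le> n \<longrightarrow> \<psi> n \<le> \<psi> m) \<and>
     \<not> summable (\<lambda>n. \<psi> (Suc n))"

definition Pi_set :: "(real \<times> real) set" where
  "Pi_set = {(x, y). \<forall>\<psi>. admissible_psi \<psi> \<longrightarrow>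
              infinite {n::nat. n \<ge> 1 \<and> dist_int (real n * x + y) < \<psi> n}}"

definition Pi0 :: "real set" where
  "Pi0 = {x. (x, 0) \<in> Pi_set}"

end

theory Submission imports Defs "HOL-Analysis.Kronecker_Approximation_Theorem" begin
lemma dist_int_le: "k \<in> \<int> \<Longrightarrow> dist_int t \<le> \<bar>t - k\<bar>"
  unfolding dist_int_def
  apply (rule cINF_lower)
   apply (rule bdd_belowI[where m=0])
   apply auto
  done

lemma dist_int_attained: "\<exists>k\<in>\<int>. dist_int t = \<bar>t - k\<bar>"
proof -
  define f where "f = (t::real) - of_int \<lfloor>t\<rfloor>"
  have f1: "0 \<le> f" "f < 1" unfolding f_def by linarith+
  define k0 :: real where "k0 = (if f \<le> 1/2 then of_int \<lfloor>t\<rfloor> else of_int \<lfloor>t\<rfloor> + 1)"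
  have k0: "k0 \<in> \<int>" unfolding k0_def by simp
  have "\<bar>t - k0\<bar> \<le> \<bar>t - k\<bar>" if kI: "k \<in> \<int>" for k
  proof -
    obtain j where j: "k = of_int j" using kI by (auto elim: Ints_cases)
    show ?thesis
    proof (cases "j \<le> \<lfloor>t\<rfloor>")
      case True
      hence "real_of_int j \<le> of_int \<lfloor>t\<rfloor>" by simp
      then show ?thesis unfolding j k0_def using f1 f_def
        by (cases "f \<le> 1/2"; simp; linarith)
    next
      case False
      hence "real_of_int j \<ge> of_int \<lfloor>t\<rfloor> + 1" by simp
      then show ?thesis unfolding j k0_def using f1 f_def
        by (cases "f \<le> 1/2"; simp; linarith)
    qed
  qed
  hence "dist_int t \<ge> \<bar>t - k0\<bar>"
    unfolding dist_int_def by (intro cINF_greatest) auto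
  with dist_int_le[OF k0, of t] k0 show ?thesis by (intro bexI[of _ k0]) auto
qed

lemma dist_int_nonneg: "dist_int t \<ge> 0"
  using dist_int_attained[of t] by auto

lemma key:
  fixes x :: real and m n :: nat
  assumes "1 \<le> m" "m < n" "dist_int (real n * x) < dist_int (real m * x)"
  shows "2 * real n * dist_int (real m * x) > 1"
proof -
  obtain a where a: "a \<in> \<int>" "dist_int (real m * x) = \<bar>real m * x - a\<bar>"
    using dist_int_attained by blast
  obtain b where b: "b \<in> \<int>" "dist_int (real n * x) = \<bar>real n * x - b\<bar>"
    using dist_int_attained by blast
  define A where "A = dist_int (real m * x)"
  define B where "B = dist_int (real n * x)"
  have A0: "A \<ge> 0" unfolding A_def by (rule dist_int_nonneg)
  have mB: "real m * B < real n * A"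
  proof -
    have "real m * B < real m * A" using assms unfolding A_def B_def by simp
    also have "\<dots> \<le> real n * A" using assms A0
      by (intro mult_right_mono) auto
    finally show ?thesis .
  qed
  have eq: "real m * b - real n * a = real n * (real m * x - a) - real m * (real n * x - b)"
    by (simp add: algebra_simps)
  have zi: "real m * b - real n * a \<in> \<int>" using a b by auto
  have nA: "real n * A = \<bar>real n * (real m * x - a)\<bar>" unfolding A_def a(2)
    by (simp add: abs_mult)
  have mB': "real m * B = \<bar>real m * (real n * x - b)\<bar>" unfolding B_def b(2)
    by (simp add: abs_mult)
  show ?thesis
  proof (cases "real m * b - real n * a = 0")
    case True
    hence "real n * (real m * x - a) = real m * (real n * x - b)" using eq by simp
    hence "real n * A = real m * B" using nA mB' by simp
    with mB show ?thesis by simp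
  next
    case False
    have "1 \<le> \<bar>real m * b - real n * a\<bar>"
      using zi False by (metis Ints_nonzero_abs_ge1)
    also have "\<dots> \<le> real n * A + real m * B" unfolding eq nA mB'
      by (rule abs_triangle_ineq4)
    finally show ?thesis using mB unfolding A_def by simp
  qed
qed

lemma irr_pos:
  fixes x :: real
  assumes "x \<notin> \<rat>" "1 \<le> m"
  shows "dist_int (real m * x) > 0"
proof (rule ccontr)
  assume "\<not> ?thesis"
  hence "dist_int (real m * x) = 0" using dist_int_nonneg[of "real m * x"] by simp
  then obtain k where k: "k \<in> \<int>" "real m * x = k" using dist_int_attained[of "real m * x"] by auto
  hence "x = k / real m" using assms(2) by (simp add: field_simps)
  moreover have "k / real m \<in> \<rat>" using k(1) by (auto elim!: Ints_cases)
  ultimately show False using assms(1) by simp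
qed

lemma small:
  fixes x :: real
  assumes "x \<notin> \<rat>" "c > 0"
  shows "\<exists>n. 1 \<le> n \<and> dist_int (real n * x) < c"
proof -
  obtain N :: nat where N: "1 / real N < c" "N > 0"
  proof -
    obtain N :: nat where "real N > 1 / c" using reals_Archimedean2 by blast
    moreover hence "N > 0" using assms(2) by (metis gr0I less_numeral_extra(3) of_nat_0 order_less_imp_not_less zero_less_divide_1_iff)
    ultimately show ?thesis using that assms(2) by (simp add: field_simps)
  qed
  obtain h k where hk: "0 < k" "k \<le> int N" "\<bar>of_int k * x - of_int h\<bar> < 1/N"
    using Dirichlet_approx[OF N(2)] by blast
  have "dist_int (real (nat k) * x) \<le> \<bar>of_int k * x - of_int h\<bar>"
    using hk(1) by (metis Ints_of_int dist_int_le of_nat_nat order_less_imp_le)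
  with hk N show ?thesis by (intro exI[of _ "nat k"]) auto
qed

theorem lemma23:
  shows "Pi0 = \<rat>"
proof
  show "\<rat> \<subseteq> Pi0"
  proof
    fix x :: real assume "x \<in> \<rat>"
    then obtain a b where ab: "b > 0" "x = of_int a / of_int b" by (auto elim: Rats_cases')
    have "infinite {n::nat. n \<ge> 1 \<and> dist_int (real n * x + 0) < \<psi> n}"
      if adm: "admissible_psi \<psi>" for \<psi>
    proof -
      have pos: "\<psi> n > 0" if n1: "n \<ge> 1" for n
      proof (rule ccontr)
        assume "\<not> \<psi> n > 0"
        hence z: "\<psi> n \<le> 0" by simp
        have "\<psi> (Suc k) = 0" if "k \<notin> {..<n}" for k
        proof -
          have "\<psi> (Suc k) \<le> \<psi> n" using adm that n1 unfolding admissible_psi_def by auto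
          moreover have "\<psi> (Suc k) \<ge> 0" using adm unfolding admissible_psi_def by auto
          ultimately show ?thesis using z by linarith
        qed
        hence "summable (\<lambda>k. \<psi> (Suc k))" by (intro summable_finite[of "{..<n}"]) auto
        thus False using adm unfolding admissible_psi_def by simp
      qed
      show ?thesis unfolding infinite_nat_iff_unbounded
      proof
        fix m :: nat
        define n where "n = (m + 1) * nat b"
        have nb: "real n = (real m + 1) * of_int b" unfolding n_def using ab(1) by (simp add: algebra_simps)
        have "nat b \<ge> 1" using ab(1) by simp
        hence "(m + 1) * 1 \<le> (m + 1) * nat b" by (rule mult_le_mono2)
        hence n1: "n > m" "n \<ge> 1" unfolding n_def by auto
        have "real n * x = of_int ((int m + 1) * a)" unfolding nb ab(2) using ab(1) by simp
        hence "dist_int (real n * x + 0) \<le> 0"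
          using dist_int_le[of "of_int ((int m + 1) * a)" "real n * x"] by simp
        hence "dist_int (real n * x + 0) < \<psi> n" using pos[OF n1(2)] by linarith
        thus "\<exists>n>m. n \<in> {n. 1 \<le> n \<and> dist_int (real n * x + 0) < \<psi> n}" using n1 by auto
      qed
    qed
    thus "x \<in> Pi0" unfolding Pi0_def Pi_set_def by auto
  qed
next
  show "Pi0 \<subseteq> \<rat>"
  proof
    fix x :: real assume xP: "x \<in> Pi0"
    show "x \<in> \<rat>"
    proof (rule ccontr)
      assume irr: "x \<notin> \<rat>"
      define g where "g = (\<lambda>m::nat. dist_int (real m * x))"
      define D where "D = (\<lambda>n::nat. Min (g ` {1..max 1 n}))"
      have fin: "finite (g ` {1..max 1 n})" "g ` {1..max 1 n} \<noteq> {}" for n by auto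
      have Dle: "D n \<le> g n" if "n \<ge> 1" for n
        unfolding D_def using that by (intro Min_le) auto
      have D0: "D n \<ge> 0" for n
        unfolding D_def using fin[of n] by (simp add: g_def dist_int_nonneg)
      have Dmono: "D n \<le> D m" if "m \<le> n" for m n
        unfolding D_def using that by (intro Min_antimono) auto
      have Dpos: "D n > 0" for n
        unfolding D_def using fin[of n] irr by (auto simp: g_def intro!: irr_pos)
      have Dgt: "D j > c" if "\<And>m. 1 \<le> m \<Longrightarrow> m \<le> max 1 j \<Longrightarrow> g m > c" for j c
        unfolding D_def using fin[of j] that by auto
      have nsum: "\<not> summable (\<lambda>k. D (Suc k))"
      proof
        assume "summable (\<lambda>k. D (Suc k))"
        then obtain N where N: "\<And>m n. m \<ge> N \<Longrightarrow> norm (sum (\<lambda>k. D (Suc k)) {m..<n}) < 1/4"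
          unfolding summable_Cauchy by (meson zero_less_divide_1_iff zero_less_numeral)
        define a where "a = N + 1"
        define c where "c = D (2 * a)"
        have c0: "c > 0" unfolding c_def by (rule Dpos)
        define P where "P = (\<lambda>n::nat. 1 \<le> n \<and> g n < c)"
        have exP: "\<exists>n. P n" using small[OF irr c0] unfolding P_def g_def by blast
        define n where "n = (LEAST n. P n)"
        have Pn: "P n" unfolding n_def using exP by (metis LeastI)
        have notP: "\<not> P m" if "m < n" for m using that unfolding n_def by (rule not_less_Least)
        have n1: "n \<ge> 1" and gn: "g n < c" using Pn unfolding P_def by auto
        have n2a: "n > 2 * a"
        proof (rule ccontr)
          assume "\<not> n > 2 * a"
          hence "c \<le> g n" unfolding c_def using Dle[OF n1] Dmono[of n "2*a"] by simp
          with gn show False by simp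
        qed
        have gm: "g m > 1 / (2 * real n)" if "1 \<le> m" "m < n" for m
        proof -
          have "g m \<ge> c" using notP[OF that(2)] that(1) unfolding P_def by simp
          hence "g n < g m" using gn by simp
          hence "2 * real n * g m > 1" using key[OF that, of x] unfolding g_def by simp
          thus ?thesis using n1 by (simp add: field_simps)
        qed
        have Dj: "D j > 1 / (2 * real n)" if "1 \<le> j" "j < n" for j
          using that gm by (intro Dgt) auto
        have "of_nat (card {N..<n-1}) * (1 / (2 * real n)) \<le> sum (\<lambda>k. D (Suc k)) {N..<n-1}"
          proof (rule sum_bounded_below)
          fix i assume "i \<in> {N..<n-1}"
          hence "1 \<le> Suc i" "Suc i < n" by auto
          thus "1 / (2 * real n) \<le> D (Suc i)" using Dj by (meson less_imp_le)
        qed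
        moreover have "card {N..<n-1} = n - a" unfolding a_def by simp
        moreover have "real (n - a) * (1 / (2 * real n)) > 1/4"
          using n2a n1 by (simp add: field_simps of_nat_diff)
        ultimately have "sum (\<lambda>k. D (Suc k)) {N..<n-1} > 1/4"
          by (metis order_less_le_trans)
        moreover have "norm (sum (\<lambda>k. D (Suc k)) {N..<n-1}) < 1/4" by (rule N) simp
        ultimately show False by simp
      qed
      have adm: "admissible_psi D" unfolding admissible_psi_def using D0 Dmono nsum by auto
      have "{n::nat. n \<ge> 1 \<and> dist_int (real n * x + 0) < D n} = {}"
        using Dle unfolding g_def by force
      moreover have "infinite {n::nat. n \<ge> 1 \<and> dist_int (real n * x + 0) < D n}"
        using xP adm unfolding Pi0_def Pi_set_def by auto
      ultimately show False by (metis finite.emptyI)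
    qed
  qed
qed

end
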